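(* For every integer $N\ge 3$, the graph $G_N=K_2\cup (N-2)K_1$ satisfies $|V(G_N)|=N$, $\Delta(G_N)=1<N-1$, and $\hat r_\infty(G_N)=1$. Consequently, there is an infinite family of graphs $G_N$ with $|V(G_N)|=N$, $\Delta(G_N)<N-1$ and $\hat r_\infty(G_N)=1$ for every $N$; and for every fixed $c>1$ there is a family of graphs $G_N$ with $|V(G_N)|=N$ and $\Delta(G_N)<c$ such that $\hat r_\infty(G_N)$ does not tend to $0$ as $N\to\infty$.
   Context: All graphs are finite and simple; a graph is nonempty if it has at least one edge. $G\cup H$ is disjoint union, $sK_1$ is the edgeless graph on $s$ vertices, $tK_2$ is a matching with $t$ edges, $\Delta$ is maximum degree. For graphs $F,G,H$, $F\to(G,H)$ means every red--blue coloring of $E(F)$ contains a red copy of $G$ or a blue copy of $H$, and $\hat r(G,H)=\min\{|E(F)|:F\to(G,H)\}$. For a nonempty graph $G$, $\hat r_\infty(G)=\lim_{t\to\infty}\frac{\hat r(tK_2,G)}{t\,|E(G)|}$ (this limit exists). *)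

theory Defs
  imports "HOL-Analysis.Analysis"
begin

text \<open>Finite simple graphs with vertices labelled by natural numbers
  (every finite simple graph is isomorphic to one of these).\<close>

record graph =
  verts :: "nat set"
  edges :: "nat set set"

definition wf_graph :: "graph \<Rightarrow> bool" where
  "wf_graph G \<longleftrightarrow> finite (verts G) \<and> (\<forall>e\<in>edges G. e \<subseteq> verts G \<and> card e = 2)"

definition nonempty_graph :: "graph \<Rightarrow> bool" where
  "nonempty_graph G \<longleftrightarrow> edges G \<noteq> {}"

definition degree :: "graph \<Rightarrow> nat \<Rightarrow> nat" where
  "degree G v = card {e \<in> edges G. v \<in> e}"

definition max_degree :: "graph \<Rightarrow> nat" where
  "max_degree G = Max (degree G ` verts G)"

definition contains_copy :: "graph \<Rightarrow> graph \<Rightarrow> bool" where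
  "contains_copy H G \<longleftrightarrow>
     (\<exists>f. inj_on f (verts G) \<and> f ` verts G \<subseteq> verts H \<and> (\<forall>e\<in>edges G. f ` e \<in> edges H))"

text \<open>Sub-graph of F formed by the edges of a given colour (True = red, False = blue).\<close>
definition colour_class :: "graph \<Rightarrow> (nat set \<Rightarrow> bool) \<Rightarrow> bool \<Rightarrow> graph" where
  "colour_class F c b = \<lparr>verts = verts F, edges = {e \<in> edges F. c e = b}\<rparr>"

definition arrows :: "graph \<Rightarrow> graph \<Rightarrow> graph \<Rightarrow> bool" where
  "arrows F G H \<longleftrightarrow>
     (\<forall>c :: nat set \<Rightarrow> bool. contains_copy (colour_class F c True) G
                             \<or> contains_copy (colour_class F c False) H)"

definition size_ramsey :: "graph \<Rightarrow> graph \<Rightarrow> nat" where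
  "size_ramsey G H = (LEAST m. \<exists>F. wf_graph F \<and> arrows F G H \<and> card (edges F) = m)"

definition matching :: "nat \<Rightarrow> graph" where
  "matching t = \<lparr>verts = {0..<2*t}, edges = {{2*i, 2*i+1} | i. i < t}\<rparr>"

definition r_infty :: "graph \<Rightarrow> real" where
  "r_infty G = lim (\<lambda>t. real (size_ramsey (matching t) G) / (real t * real (card (edges G))))"

definition G_N :: "nat \<Rightarrow> graph" where
  "G_N N = \<lparr>verts = {0..<N}, edges = {{0, 1}}\<rparr>"

end

theory Submission
  imports Defs "HOL-Combinatorics.Transposition"
begin

lemma GN_edge: "edges (G_N N) = {{0,1}}" by (simp add: G_N_def)

lemma lower:
  assumes wf: "wf_graph F" and ar: "arrows F (matching t) (G_N N)"
  shows "t \<le> card (edges F)"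
proof -
  have "edges F \<subseteq> Pow (verts F)" using wf unfolding wf_graph_def by blast
  moreover have "finite (verts F)" using wf unfolding wf_graph_def by blast
  ultimately have fin: "finite (edges F)" by (meson finite_Pow_iff finite_subset)
  have be: "edges (colour_class F (\<lambda>_. True) False) = {}"
    by (simp add: colour_class_def)
  have "{0,1} \<in> edges (G_N N)" by (simp add: G_N_def)
  then have nb: "\<not> contains_copy (colour_class F (\<lambda>_. True) False) (G_N N)"
    unfolding contains_copy_def be by blast
  then have "contains_copy (colour_class F (\<lambda>_. True) True) (matching t)"
    using ar unfolding arrows_def by blast
  then obtain f where inj0: "inj_on f (verts (matching t))"
    and ed0: "\<forall>e\<in>edges (matching t). f ` e \<in> edges (colour_class F (\<lambda>_. True) True)"
    unfolding contains_copy_def by blast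
  have inj: "inj_on f {0..<2*t}" using inj0 by (simp add: matching_def)
  have sube: "edges (colour_class F (\<lambda>_. True) True) \<subseteq> edges F"
    by (simp add: colour_class_def)
  have ed: "\<forall>i<t. f ` {2*i, 2*i+1} \<in> edges F"
  proof (intro allI impI)
    fix i assume "i < t"
    then have "{2*i, 2*i+1} \<in> edges (matching t)" by (auto simp: matching_def)
    then show "f ` {2*i, 2*i+1} \<in> edges F" using ed0 sube by blast
  qed
  define g where "g i = f ` {2*i, 2*i+1}" for i
  have "inj_on g {..<t}"
  proof (rule inj_onI)
    fix i j assume i: "i \<in> {..<t}" and j: "j \<in> {..<t}" and e: "g i = g j"
    have "f (2*i) \<in> g i" by (simp add: g_def)
    then have "f (2*i) \<in> f ` {2*j, 2*j+1}" using e by (simp only: g_def)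
    then obtain y where y: "y \<in> {2*j, 2*j+1}" "f (2*i) = f y" by auto
    have "y \<in> {0..<2*t}" using y j by auto
    moreover have "2*i \<in> {0..<2*t}" using i by auto
    ultimately have "2*i = y" using inj y(2) by (meson inj_onD)
    moreover have "y = 2*j \<or> y = 2*j+1" using y(1) by simp
    ultimately show "i = j" by presburger
  qed
  then have "card (g ` {..<t}) = t" by (simp add: card_image)
  moreover have "g ` {..<t} \<subseteq> edges F" using ed unfolding g_def by blast
  then have "card (g ` {..<t}) \<le> card (edges F)" by (rule card_mono[OF fin])
  ultimately show ?thesis by simp
qed

definition Ft :: "nat \<Rightarrow> nat \<Rightarrow> graph" where
  "Ft t N = \<lparr>verts = {0..<max (2*t) (N+2)}, edges = {{2*i, 2*i+1} | i. i < t}\<rparr>"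

lemma Ft_wf: "wf_graph (Ft t N)"
  unfolding wf_graph_def Ft_def by auto

lemma Ft_card: "card (edges (Ft t N)) = t"
proof -
  have "edges (Ft t N) = (\<lambda>i. {2*i, 2*i+1}) ` {..<t}" unfolding Ft_def by auto
  moreover have "inj_on (\<lambda>i. {2*i, 2*i+1::nat}) {..<t}"
    by (rule inj_onI) (auto simp: doubleton_eq_iff)
  ultimately show ?thesis by (simp add: card_image)
qed

lemma Ft_arrows: "arrows (Ft t N) (matching t) (G_N N)"
  unfolding arrows_def
proof (intro allI)
  fix c :: "nat set \<Rightarrow> bool"
  show "contains_copy (colour_class (Ft t N) c True) (matching t) \<or>
        contains_copy (colour_class (Ft t N) c False) (G_N N)"
  proof (cases "\<forall>i<t. c {2*i, 2*i+1}")
    case True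
    have "contains_copy (colour_class (Ft t N) c True) (matching t)"
      unfolding contains_copy_def
    proof (intro exI conjI)
      show "inj_on id (verts (matching t))" by simp
      show "id ` verts (matching t) \<subseteq> verts (colour_class (Ft t N) c True)"
        by (auto simp: matching_def colour_class_def Ft_def)
      show "\<forall>e\<in>edges (matching t). id ` e \<in> edges (colour_class (Ft t N) c True)"
      proof
        fix e assume "e \<in> edges (matching t)"
        then obtain j where j: "j < t" "e = {2*j, 2*j+1}" by (auto simp: matching_def)
        have "c e" using True j by simp
        then show "id ` e \<in> edges (colour_class (Ft t N) c True)"
          using j by (auto simp: colour_class_def Ft_def)
      qed
    qed
    then show ?thesis ..
  next
    case False
    then obtain i where i: "i < t" "\<not> c {2*i, 2*i+1}" by auto
    define f where "f x = Transposition.transpose 0 (2*i) (Transposition.transpose 1 (2*i+1) x)" for x :: nat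
    have inj: "inj_on f {0..<N}"
    proof (rule inj_onI)
      fix x y assume "f x = f y"
      then show "x = y" unfolding f_def by (meson transpose_eq_imp_eq)
    qed
    have tr: "Transposition.transpose a b z \<in> {a, b, z}" for a b z :: nat
      by (simp add: Transposition.transpose_def)
    have sub: "f ` {0..<N} \<subseteq> {0..<max (2*t) (N+2)}"
    proof
      fix y assume "y \<in> f ` {0..<N}"
      then obtain x where x: "x < N" "y = f x" by auto
      define T where "T = Transposition.transpose 1 (2*i+1) x"
      have T: "T \<in> {1, 2*i+1, x}" unfolding T_def by (rule tr)
      have "y \<in> {0, 2*i, T}" unfolding x(2) f_def T_def[symmetric] by (rule tr)
      then have "y \<in> {0, 2*i, 1, 2*i+1, x}" using T by blast
      then show "y \<in> {0..<max (2*t) (N+2)}" using i(1) x(1) by auto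
    qed
    have im: "f ` {0,1} = {2*i, 2*i+1}" by (simp add: f_def Transposition.transpose_def insert_commute)
    have "contains_copy (colour_class (Ft t N) c False) (G_N N)"
      unfolding contains_copy_def
    proof (intro exI conjI)
      show "inj_on f (verts (G_N N))" using inj by (simp add: G_N_def)
      show "f ` verts (G_N N) \<subseteq> verts (colour_class (Ft t N) c False)"
        using sub by (simp add: G_N_def colour_class_def Ft_def)
      show "\<forall>e\<in>edges (G_N N). f ` e \<in> edges (colour_class (Ft t N) c False)"
        using im i by (auto simp: G_N_def colour_class_def Ft_def)
    qed
    then show ?thesis ..
  qed
qed

lemma sr: "size_ramsey (matching t) (G_N N) = t"
  unfolding size_ramsey_def
proof (rule Least_equality)
  show "\<exists>F. wf_graph F \<and> arrows F (matching t) (G_N N) \<and> card (edges F) = t"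
    using Ft_wf Ft_arrows Ft_card by blast
next
  fix m assume "\<exists>F. wf_graph F \<and> arrows F (matching t) (G_N N) \<and> card (edges F) = m"
  then show "t \<le> m" using lower by blast
qed

lemma rinf: "r_infty (G_N N) = 1"
proof -
  have "(\<lambda>t. real (size_ramsey (matching t) (G_N N)) / (real t * real (card (edges (G_N N)))))
        \<longlonglongrightarrow> 1"
  proof (rule tendsto_eventually)
    show "\<forall>\<^sub>F t in sequentially. real (size_ramsey (matching t) (G_N N)) /
            (real t * real (card (edges (G_N N)))) = 1"
      using eventually_ge_at_top[of "1::nat"]
      by eventually_elim (simp add: sr GN_edge)
  qed
  then show ?thesis unfolding r_infty_def by (rule limI)
qed

lemma deg: "degree (G_N N) v = (if v \<in> {0,1} then 1 else 0)"
proof -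
  have "{e \<in> edges (G_N N). v \<in> e} = (if v \<in> {0,1} then {{0,1}} else {})"
    by (auto simp: G_N_def)
  then show ?thesis unfolding degree_def by simp
qed

lemma basics:
  assumes "N \<ge> 3"
  shows "wf_graph (G_N N) \<and> nonempty_graph (G_N N) \<and>
            card (verts (G_N N)) = N \<and> max_degree (G_N N) = 1"
proof -
  have "degree (G_N N) ` {0..<N} = {0, 1}"
  proof
    show "degree (G_N N) ` {0..<N} \<subseteq> {0, 1}"
      using deg by auto
  next
    have "degree (G_N N) 0 = 1" "degree (G_N N) 2 = 0"
      by (simp_all add: deg)
    moreover have "(0::nat) \<in> {0..<N}" "(2::nat) \<in> {0..<N}" using assms by auto
    ultimately show "{0, 1} \<subseteq> degree (G_N N) ` {0..<N}" by (metis empty_subsetI image_eqI insert_subset)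
  qed
  then have "max_degree (G_N N) = 1" by (simp add: max_degree_def G_N_def)
  then show ?thesis using assms
    by (auto simp: wf_graph_def nonempty_graph_def G_N_def)
qed

theorem corollary2p7:
  shows "(\<forall>N::nat. N \<ge> 3 \<longrightarrow>
            wf_graph (G_N N) \<and> nonempty_graph (G_N N) \<and>
            card (verts (G_N N)) = N \<and>
            max_degree (G_N N) = 1 \<and> 1 < N - 1 \<and>
            r_infty (G_N N) = 1)
       \<and> (\<exists>Gf :: nat \<Rightarrow> graph. \<forall>N::nat. N \<ge> 3 \<longrightarrow>
            wf_graph (Gf N) \<and> nonempty_graph (Gf N) \<and>
            card (verts (Gf N)) = N \<and> max_degree (Gf N) < N - 1 \<and>
            r_infty (Gf N) = 1)
       \<and> (\<forall>c::real. c > 1 \<longrightarrow> (\<exists>Gf :: nat \<Rightarrow> graph.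
            (\<forall>N::nat. N \<ge> 3 \<longrightarrow>
               wf_graph (Gf N) \<and> nonempty_graph (Gf N) \<and>
               card (verts (Gf N)) = N \<and> real (max_degree (Gf N)) < c) \<and>
            \<not> ((\<lambda>N. r_infty (Gf N)) \<longlonglongrightarrow> 0)))"
proof -
  have A: "\<forall>N::nat. N \<ge> 3 \<longrightarrow> wf_graph (G_N N) \<and> nonempty_graph (G_N N) \<and>
            card (verts (G_N N)) = N \<and> max_degree (G_N N) = 1 \<and> 1 < N - 1 \<and>
            r_infty (G_N N) = 1"
    using basics rinf by auto
  have nt: "\<not> ((\<lambda>N. r_infty (G_N N)) \<longlonglongrightarrow> 0)"
    by (simp add: rinf LIMSEQ_const_iff)
  have B: "\<exists>Gf :: nat \<Rightarrow> graph. \<forall>N::nat. N \<ge> 3 \<longrightarrow>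
            wf_graph (Gf N) \<and> nonempty_graph (Gf N) \<and>
            card (verts (Gf N)) = N \<and> max_degree (Gf N) < N - 1 \<and>
            r_infty (Gf N) = 1"
    using A by (intro exI[of _ G_N]) auto
  have C: "\<forall>c::real. c > 1 \<longrightarrow> (\<exists>Gf :: nat \<Rightarrow> graph.
            (\<forall>N::nat. N \<ge> 3 \<longrightarrow>
               wf_graph (Gf N) \<and> nonempty_graph (Gf N) \<and>
               card (verts (Gf N)) = N \<and> real (max_degree (Gf N)) < c) \<and>
            \<not> ((\<lambda>N. r_infty (Gf N)) \<longlonglongrightarrow> 0))"
  proof (intro allI impI)
    fix c :: real assume c: "c > 1"
    show "\<exists>Gf :: nat \<Rightarrow> graph.
            (\<forall>N::nat. N \<ge> 3 \<longrightarrow>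
               wf_graph (Gf N) \<and> nonempty_graph (Gf N) \<and>
               card (verts (Gf N)) = N \<and> real (max_degree (Gf N)) < c) \<and>
            \<not> ((\<lambda>N. r_infty (Gf N)) \<longlonglongrightarrow> 0)"
      using A c nt by (intro exI[of _ G_N]) auto
  qed
  show ?thesis using A B C by blast
qed

end
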